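(* Let $M:\alpha\mapsto M_\alpha$ be a matroid flock on a finite set $E$, let $\alpha\in\mathbb{Z}^E$, and let $J\subseteq E$. If $M_\alpha=M_{\alpha+e_J}$, then $\lambda_{M_\alpha}(J)=0$.
   Context: $e_J:=\sum_{i\in J}e_i$ ($e_i$ unit vectors), $\mathbf{1}:=e_E$. A matroid flock of rank $d$ on $E$ is a map $M$ assigning to each $\alpha\in\mathbb{Z}^E$ a matroid $M_\alpha$ on $E$ of rank $d$ with (MF1) $M_\alpha/i=M_{\alpha+e_i}\setminus i$ for all $\alpha$, $i$ (contraction, deletion); and (MF2) $M_\alpha=M_{\alpha+\mathbf{1}}$. For a matroid $N$ on $E$ with rank function $r_N$, the connectivity function is $\lambda_N(J):=r_N(J)+r_N(E\setminus J)-r_N(E)$. *)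

theory Defs
  imports Main
begin

definition matroid :: "'a set \<Rightarrow> 'a set set \<Rightarrow> bool" where
  "matroid E Ind \<longleftrightarrow> finite E \<and> Ind \<subseteq> Pow E \<and> {} \<in> Ind
     \<and> (\<forall>X Y. Y \<in> Ind \<longrightarrow> X \<subseteq> Y \<longrightarrow> X \<in> Ind)
     \<and> (\<forall>X Y. X \<in> Ind \<longrightarrow> Y \<in> Ind \<longrightarrow> card X < card Y
            \<longrightarrow> (\<exists>y \<in> Y - X. insert y X \<in> Ind))"

definition mrank :: "'a set set \<Rightarrow> 'a set \<Rightarrow> nat" where
  "mrank Ind X = Max (card ` {Y. Y \<subseteq> X \<and> Y \<in> Ind})"

definition mdelete :: "'a set set \<Rightarrow> 'a \<Rightarrow> 'a set set" where
  "mdelete Ind i = {Y \<in> Ind. i \<notin> Y}"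

definition mcontract :: "'a set \<Rightarrow> 'a set set \<Rightarrow> 'a \<Rightarrow> 'a set set" where
  "mcontract E Ind i = {Y. Y \<subseteq> E - {i} \<and> mrank Ind (insert i Y) = card Y + mrank Ind {i}}"

definition evec :: "'a set \<Rightarrow> 'a \<Rightarrow> int" where
  "evec J = (\<lambda>x. if x \<in> J then 1 else 0)"

definition vadd :: "('a \<Rightarrow> int) \<Rightarrow> ('a \<Rightarrow> int) \<Rightarrow> 'a \<Rightarrow> int" where
  "vadd \<alpha> \<beta> = (\<lambda>x. \<alpha> x + \<beta> x)"

definition matroid_flock :: "nat \<Rightarrow> (('a::finite \<Rightarrow> int) \<Rightarrow> 'a set set) \<Rightarrow> bool" where
  "matroid_flock d M \<longleftrightarrow>
     (\<forall>\<alpha>. matroid UNIV (M \<alpha>) \<and> mrank (M \<alpha>) UNIV = d)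
   \<and> (\<forall>\<alpha> i. mcontract UNIV (M \<alpha>) i = mdelete (M (vadd \<alpha> (evec {i}))) i)
   \<and> (\<forall>\<alpha>. M \<alpha> = M (vadd \<alpha> (evec UNIV)))"

definition conn :: "'a set \<Rightarrow> 'a set set \<Rightarrow> 'a set \<Rightarrow> int" where
  "conn E Ind J = int (mrank Ind J) + int (mrank Ind (E - J)) - int (mrank Ind E)"

end

theory Submission
  imports Defs
begin

lemma mr_fin: "matroid E Ind \<Longrightarrow> finite {Y. Y \<subseteq> X \<and> Y \<in> Ind}"
  unfolding matroid_def
  by (rule finite_subset[of _ "Pow E"]) auto

lemma mr_fin_el: "matroid E Ind \<Longrightarrow> Y \<in> Ind \<Longrightarrow> finite Y"
  unfolding matroid_def by (meson PowD finite_subset subsetD)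

lemma mr_ge: "matroid E Ind \<Longrightarrow> Y \<subseteq> X \<Longrightarrow> Y \<in> Ind \<Longrightarrow> card Y \<le> mrank Ind X"
  unfolding mrank_def
  by (rule Max_ge) (auto intro: finite_imageI[OF mr_fin])

lemma mr_obtain: "matroid E Ind \<Longrightarrow> \<exists>Y. Y \<subseteq> X \<and> Y \<in> Ind \<and> card Y = mrank Ind X"
proof -
  assume m: "matroid E Ind"
  have "{} \<in> {Y. Y \<subseteq> X \<and> Y \<in> Ind}" using m unfolding matroid_def by auto
  then have "Max (card ` {Y. Y \<subseteq> X \<and> Y \<in> Ind}) \<in> card ` {Y. Y \<subseteq> X \<and> Y \<in> Ind}"
    by (intro Max_in finite_imageI mr_fin[OF m]) auto
  then show ?thesis unfolding mrank_def by force
qed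

lemma mr_mono: "matroid E Ind \<Longrightarrow> X \<subseteq> X' \<Longrightarrow> mrank Ind X \<le> mrank Ind X'"
  by (metis mr_ge mr_obtain order_trans)

lemma mr_indep: "matroid E Ind \<Longrightarrow> Y \<in> Ind \<Longrightarrow> mrank Ind Y = card Y"
  by (metis card_mono le_antisym mr_fin_el mr_ge mr_obtain order_refl)

lemma mr_indep_iff: "matroid E Ind \<Longrightarrow> finite Y \<Longrightarrow> mrank Ind Y = card Y \<Longrightarrow> Y \<in> Ind"
  by (metis card_subset_eq mr_obtain)

lemma mr_extend:
  assumes m: "matroid E Ind" and I: "I \<in> Ind" "I \<subseteq> S"
  shows "\<exists>B. I \<subseteq> B \<and> B \<subseteq> S \<and> B \<in> Ind \<and> card B = mrank Ind S"
proof -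
  let ?C = "{B. I \<subseteq> B \<and> B \<subseteq> S \<and> B \<in> Ind}"
  have fC: "finite ?C" by (rule finite_subset[OF _ mr_fin[OF m, of S]]) auto
  have "I \<in> ?C" using I by auto
  then have "Max (card ` ?C) \<in> card ` ?C" by (intro Max_in finite_imageI fC) auto
  then obtain B where B: "B \<in> ?C" "card B = Max (card ` ?C)" by force
  have mx: "card B' \<le> card B" if "B' \<in> ?C" for B'
  proof -
    have "card B' \<in> card ` ?C" using that by blast
    then have "card B' \<le> Max (card ` ?C)" by (rule Max_ge[OF finite_imageI[OF fC]])
    then show ?thesis using B(2) by simp
  qed
  have le: "card B \<le> mrank Ind S" by (rule mr_ge[OF m]) (use B(1) in auto)
  have "\<not> card B < mrank Ind S"
  proof
    assume lt: "card B < mrank Ind S"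
    obtain Z where Z: "Z \<subseteq> S" "Z \<in> Ind" "card Z = mrank Ind S" using mr_obtain[OF m] by blast
    then obtain y where y: "y \<in> Z - B" "insert y B \<in> Ind"
    proof -
      have aug: "\<forall>X Y. X \<in> Ind \<longrightarrow> Y \<in> Ind \<longrightarrow> card X < card Y
            \<longrightarrow> (\<exists>y \<in> Y - X. insert y X \<in> Ind)" using m unfolding matroid_def by blast
      have "B \<in> Ind" using B(1) by blast
      moreover have "card B < card Z" using Z(3) lt by simp
      ultimately have "\<exists>y \<in> Z - B. insert y B \<in> Ind" using aug Z(2) by blast
      then show ?thesis using that by blast
    qed
    have "insert y B \<in> ?C" using y Z B(1) by auto
    moreover have "card (insert y B) = Suc (card B)"
      using y mr_fin_el[OF m, of B] B(1) by auto
    ultimately show False using mx[of "insert y B"] by simp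
  qed
  then show ?thesis using B(1) le by auto
qed

lemma mr_sub: "matroid E Ind \<Longrightarrow> Y \<in> Ind \<Longrightarrow> X \<subseteq> Y \<Longrightarrow> X \<in> Ind"
  unfolding matroid_def by blast

lemma mr_finE: "matroid E Ind \<Longrightarrow> finite E"
  unfolding matroid_def by (erule conjE)

lemma del_rank: "i \<notin> X \<Longrightarrow> mrank (mdelete Ind i) X = mrank Ind X"
  unfolding mrank_def mdelete_def
  by (rule arg_cong[where f="\<lambda>A. Max (card ` A)"]) auto

lemma contr_rank:
  assumes m: "matroid E Ind" and X: "X \<subseteq> E - {i}"
  shows "mrank (mcontract E Ind i) X = mrank Ind (insert i X) - mrank Ind {i}"
proof -
  let ?r = "mrank Ind"
  let ?S = "{Z. Z \<subseteq> X \<and> Z \<in> mcontract E Ind i}"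
  have fE: "finite E" using m by (rule mr_finE)
  have fX: "finite X" using X fE finite_subset by blast
  have sP: "?S \<subseteq> Pow X" by blast
  have fS: "finite ?S" using finite_subset[OF sP] fX by (simp only: finite_Pow_iff)
  have e: "{} \<in> ?S" unfolding mcontract_def by auto
  have up: "card Z \<le> ?r (insert i X) - ?r {i}" if "Z \<in> ?S" for Z
  proof -
    have Z1: "Z \<subseteq> X" and Z2: "Z \<in> mcontract E Ind i" using that by simp_all
    have "?r (insert i Z) = card Z + ?r {i}" using Z2 unfolding mcontract_def by blast
    moreover have "?r (insert i Z) \<le> ?r (insert i X)" by (rule mr_mono[OF m]) (rule insert_mono[OF Z1])
    ultimately show ?thesis by linarith
  qed
  obtain I where I: "I \<subseteq> {i}" "I \<in> Ind" "card I = ?r {i}" using mr_obtain[OF m, of "{i}"] by blast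
  have IS: "I \<subseteq> insert i X" using I(1) by blast
  obtain B where B: "I \<subseteq> B" "B \<subseteq> insert i X" "B \<in> Ind" "card B = ?r (insert i X)"
    using mr_extend[OF m I(2) IS] by blast
  have fB: "finite B" using mr_fin_el[OF m B(3)] .
  have low: "\<exists>Z \<in> ?S. ?r (insert i X) - ?r {i} \<le> card Z"
  proof (cases "i \<in> I")
    case True
    then have Ii: "I = {i}" using I(1) by blast
    let ?Z = "B - {i}"
    have iB: "i \<in> B" using B(1) Ii by blast
    have ZB: "insert i ?Z = B" using iB by blast
    have rZ: "?r (insert i ?Z) = card B" unfolding ZB by (rule mr_indep[OF m B(3)])
    have cZ: "card ?Z = card B - 1" using iB fB by simp
    have pos: "card B > 0" using iB fB card_gt_0_iff by blast
    have ri1: "?r {i} = 1" using I(3) Ii by simp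
    have eq: "?r (insert i ?Z) = card ?Z + ?r {i}" using rZ cZ ri1 pos by arith
    have ZE: "?Z \<subseteq> E - {i}" using B(2) X by blast
    have ZX: "?Z \<subseteq> X" using B(2) by blast
    have "?Z \<in> mcontract E Ind i" unfolding mcontract_def using ZE eq by blast
    then have ZS: "?Z \<in> ?S" using ZX by blast
    have "?r (insert i X) - ?r {i} \<le> card ?Z" using cZ B(4) ri1 by simp
    then show ?thesis using ZS by blast
  next
    case False
    then have I0: "I = {}" using I(1) by blast
    have ri: "?r {i} = 0" using I(3) I0 by simp
    have iB: "i \<notin> B"
    proof
      assume "i \<in> B"
      then have "{i} \<in> Ind" using mr_sub[OF m B(3)] by blast
      then have "?r {i} = card {i}" by (rule mr_indep[OF m])
      then show False using ri by simp
    qed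
    have BX: "B \<subseteq> X" using B(2) iB by blast
    have "?r (insert i B) \<le> ?r (insert i X)" by (rule mr_mono[OF m]) (rule insert_mono[OF BX])
    moreover have "card B \<le> ?r (insert i B)" by (rule mr_ge[OF m _ B(3)]) (rule subset_insertI)
    ultimately have eq: "?r (insert i B) = card B + ?r {i}" using B(4) ri by linarith
    have BE: "B \<subseteq> E - {i}" using BX X by blast
    have "B \<in> mcontract E Ind i" unfolding mcontract_def using BE eq by blast
    then have BS: "B \<in> ?S" using BX by blast
    have "?r (insert i X) - ?r {i} \<le> card B" using B(4) by simp
    then show ?thesis using BS by blast
  qed
  have "Max (card ` ?S) = ?r (insert i X) - ?r {i}"
  proof (rule antisym)
    show "Max (card ` ?S) \<le> ?r (insert i X) - ?r {i}"
    proof (subst Max_le_iff)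
      show "finite (card ` ?S)" using fS by blast
      show "card ` ?S \<noteq> {}" using e by blast
      show "\<forall>a\<in>card ` ?S. a \<le> ?r (insert i X) - ?r {i}" using up by blast
    qed
    show "?r (insert i X) - ?r {i} \<le> Max (card ` ?S)"
    proof -
      obtain Z where Z: "Z \<in> ?S" "?r (insert i X) - ?r {i} \<le> card Z" using low by blast
      have "card Z \<le> Max (card ` ?S)" by (rule Max_ge[OF finite_imageI[OF fS]]) (use Z(1) in blast)
      then show ?thesis using Z(2) by linarith
    qed
  qed
  then show ?thesis unfolding mrank_def by simp
qed

lemma flock_m: "matroid_flock d M \<Longrightarrow> matroid UNIV (M \<alpha>)"
  unfolding matroid_flock_def by (drule conjunct1, drule spec[of _ \<alpha>], erule conjunct1)

lemma flock_c: "matroid_flock d M \<Longrightarrow>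
   mcontract UNIV (M \<alpha>) i = mdelete (M (vadd \<alpha> (evec {i}))) i"
  unfolding matroid_flock_def by (drule conjunct2, drule conjunct1, erule allE[of _ \<alpha>], erule allE[of _ i])

lemma key:
  assumes fl: "matroid_flock d M" and fJ: "finite J"
  shows "\<And>\<alpha> Y. Y \<subseteq> - J \<Longrightarrow> (Y \<in> M (vadd \<alpha> (evec J)) \<longleftrightarrow>
           mrank (M \<alpha>) (Y \<union> J) = card Y + mrank (M \<alpha>) J)"
  using fJ
proof (induction J rule: finite_induct)
  case empty
  have m: "matroid UNIV (M \<alpha>)" using fl by (rule flock_m)
  have v: "vadd \<alpha> (evec {}) = \<alpha>" unfolding vadd_def evec_def by auto
  have "mrank (M \<alpha>) {} = 0"
    using mr_indep[OF m, of "{}"] m unfolding matroid_def by auto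
  then have "?case \<longleftrightarrow> (Y \<in> M \<alpha> \<longleftrightarrow> mrank (M \<alpha>) Y = card Y)" unfolding v by simp
  moreover have "Y \<in> M \<alpha> \<longleftrightarrow> mrank (M \<alpha>) Y = card Y"
    using mr_indep[OF m, of Y] mr_indep_iff[OF m finite, of Y] by blast
  ultimately show ?case by blast
next
  case (insert i F)
  define \<alpha>' where "\<alpha>' = vadd \<alpha> (evec {i})"
  have m: "matroid UNIV (M \<alpha>)" using fl by (rule flock_m)
  have fl2: "mcontract UNIV (M \<alpha>) i = mdelete (M \<alpha>') i"
    using flock_c[OF fl] unfolding \<alpha>'_def .
  have v: "vadd \<alpha> (evec (insert i F)) = vadd \<alpha>' (evec F)"
    unfolding vadd_def evec_def \<alpha>'_def using insert.hyps by auto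
  have Y: "Y \<subseteq> - F" using insert.prems by auto
  have iYF: "i \<notin> Y \<union> F" using insert.prems insert.hyps by auto
  let ?r = "mrank (M \<alpha>)" and ?r' = "mrank (M \<alpha>')"
  have rr: "?r' X = ?r (insert i X) - ?r {i}" if "i \<notin> X" for X
  proof -
    have "?r' X = mrank (mdelete (M \<alpha>') i) X" using del_rank that by metis
    also have "\<dots> = mrank (mcontract UNIV (M \<alpha>) i) X" using fl2 by simp
    also have "\<dots> = ?r (insert i X) - ?r {i}" using contr_rank[OF m] that by auto
    finally show ?thesis .
  qed
  have a: "?r' (Y \<union> F) = ?r (insert i (Y \<union> F)) - ?r {i}" using rr iYF by auto
  have b: "?r' F = ?r (insert i F) - ?r {i}" using rr iYF by auto
  have c1: "?r {i} \<le> ?r (insert i F)" by (rule mr_mono[OF m]) auto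
  have c2: "?r (insert i F) \<le> ?r (insert i (Y \<union> F))" by (rule mr_mono[OF m]) auto
  have e: "Y \<union> insert i F = insert i (Y \<union> F)" by auto
  have "Y \<in> M (vadd \<alpha> (evec (insert i F))) \<longleftrightarrow>
     ?r (insert i (Y \<union> F)) - ?r {i} = card Y + (?r (insert i F) - ?r {i})"
    using insert.IH[OF Y, of \<alpha>'] unfolding v a b .
  also have "\<dots> \<longleftrightarrow> ?r (insert i (Y \<union> F)) = card Y + ?r (insert i F)"
    using c1 c2 by linarith
  finally show ?case unfolding e .
qed

theorem mainTheorem17:
  fixes M :: "('a::finite \<Rightarrow> int) \<Rightarrow> 'a set set" and d :: nat
    and \<alpha> :: "'a \<Rightarrow> int" and J :: "'a set"
  assumes "matroid_flock d M"
    and "M \<alpha> = M (vadd \<alpha> (evec J))"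
  shows "conn UNIV (M \<alpha>) J = 0"
proof -
  let ?r = "mrank (M \<alpha>)"
  have m: "matroid UNIV (M \<alpha>)" using assms(1) by (rule flock_m)
  obtain Y where Y: "Y \<subseteq> - J" "Y \<in> M \<alpha>" "card Y = ?r (- J)" using mr_obtain[OF m] by blast
  have "?r (Y \<union> J) = card Y + ?r J"
    using key[OF assms(1) finite Y(1), of \<alpha>] Y assms(2) by auto
  moreover have "?r (Y \<union> J) \<le> ?r UNIV" using mr_mono[OF m] by auto
  ultimately have ge: "?r (- J) + ?r J \<le> ?r UNIV" using Y(3) by simp
  obtain B where B: "B \<in> M \<alpha>" "card B = ?r UNIV" using mr_obtain[OF m] by blast
  have sub: "\<And>X. X \<subseteq> B \<Longrightarrow> X \<in> M \<alpha>" using m B(1) unfolding matroid_def by blast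
  have "card (B \<inter> J) \<le> ?r J" using mr_ge[OF m _ sub] by auto
  moreover have "card (B - J) \<le> ?r (- J)" by (rule mr_ge[OF m _ sub]) auto
  moreover have "card B = card (B \<inter> J) + card (B - J)"
    by (rule card_Int_Diff) simp
  ultimately have le: "?r UNIV \<le> ?r J + ?r (- J)" using B(2) by linarith
  show ?thesis unfolding conn_def using ge le proof -
    have "UNIV - J = - J" by auto
    then show "int (?r J) + int (?r (UNIV - J)) - int (?r UNIV) = 0" using ge le by simp
  qed
qed

end
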